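(* In the event-driven HotStuff implementation (as defined in the context), let $b$ and $w$ be two conflicting nodes such that $b.\mathit{height} = w.\mathit{height}$. Then $b$ and $w$ cannot both have valid quorum certificates.
   Context: There are $n = 3f+1$ replicas, at most $f$ of which are Byzantine; the others are honest. Messages are signed with unforgeable signatures. Replicas build a tree of nodes; each node $b$ has a parent $b.\mathit{parent}$, a height $b.\mathit{height}$ equal to its parent's height plus one, a command $b.\mathit{cmd}$, and a quorum certificate $b.\mathit{justify}$. A (valid) quorum certificate (QC) for a node $x$ consists of votes for $x$ signed by $2f+1$ distinct replicas; $\mathit{qc}.\mathit{node}$ denotes the node it refers to. Two nodes are conflicting if neither is an ancestor-or-equal of the other. Voting rule of an honest replica: it keeps a variable $\mathit{vheight}$ (height of the last node it voted for) and a locked node $b_{\mathit{lock}}$. Upon receiving a proposal $b_{\mathit{new}}$, it votes for $b_{\mathit{new}}$ only if $b_{\mathit{new}}.\mathit{height} > \mathit{vheight}$ and ($b_{\mathit{new}}$ extends $b_{\mathit{lock}}$ or $b_{\mathit{new}}.\mathit{justify}.\mathit{node}.\mathit{height} > b_{\mathit{lock}}.\mathit{height}$); when it votes it sets $\mathit{vheight} \leftarrow b_{\mathit{new}}.\mathit{height}$. In particular an honest replica votes at most once per height. *)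

theory Defs
  imports Main
begin

text \<open>Node tree: parent is None for the genesis/root node. a is an ancestor-or-equal of b.\<close>
definition ancestor_eq :: "('n \<Rightarrow> 'n option) \<Rightarrow> 'n \<Rightarrow> 'n \<Rightarrow> bool" where
  "ancestor_eq parent a b \<longleftrightarrow> (\<lambda>x y. parent y = Some x)\<^sup>*\<^sup>* a b"

definition conflicting :: "('n \<Rightarrow> 'n option) \<Rightarrow> 'n \<Rightarrow> 'n \<Rightarrow> bool" where
  "conflicting parent a b \<longleftrightarrow> \<not> ancestor_eq parent a b \<and> \<not> ancestor_eq parent b a"

definition tree_heights :: "('n \<Rightarrow> 'n option) \<Rightarrow> ('n \<Rightarrow> nat) \<Rightarrow> bool" where
  "tree_heights parent height \<longleftrightarrow> (\<forall>b p. parent b = Some p \<longrightarrow> height b = Suc (height p))"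

text \<open>A valid QC for x: signed votes for x by 2f+1 distinct replicas. By unforgeability,
  a replica's vote exists only if it actually cast it, i.e. x occurs in its vote history.\<close>
definition has_valid_qc :: "'r set \<Rightarrow> nat \<Rightarrow> ('r \<Rightarrow> 'n list) \<Rightarrow> 'n \<Rightarrow> bool" where
  "has_valid_qc R f votes x \<longleftrightarrow>
     (\<exists>Q. Q \<subseteq> R \<and> card Q \<ge> 2 * f + 1 \<and> (\<forall>r\<in>Q. x \<in> set (votes r)))"

text \<open>Honest voting rule applied to a chronological vote history vs.
  vheight starts at 0 and equals the height of the last voted node; locks i is the
  locked node when the i-th vote is cast; justify b is b.justify.node.\<close>
definition honest_votes ::
  "('n \<Rightarrow> 'n option) \<Rightarrow> ('n \<Rightarrow> nat) \<Rightarrow> ('n \<Rightarrow> 'n) \<Rightarrow> (nat \<Rightarrow> 'n) \<Rightarrow> 'n list \<Rightarrow> bool" where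
  "honest_votes parent height justify locks vs \<longleftrightarrow>
     (\<forall>i < length vs.
        height (vs ! i) > (if i = 0 then 0 else height (vs ! (i - 1))) \<and>
        (ancestor_eq parent (locks i) (vs ! i) \<or> height (justify (vs ! i)) > height (locks i)))"

end

theory Submission
  imports Defs
begin

lemma hv_mono:
  assumes "honest_votes parent height justify lk vs" "j < length vs" "i < j"
  shows "height (vs ! i) < height (vs ! j)"
  using assms(2,3)
proof (induction j)
  case 0 then show ?case by simp
next
  case (Suc j)
  have "height (vs ! j) < height (vs ! Suc j)"
    using assms(1) Suc.prems unfolding honest_votes_def by (metis diff_Suc_1 nat.distinct(1))
  then show ?case using Suc by (cases "i = j") auto
qed

lemma hv_inj:
  assumes "honest_votes parent height justify lk vs" "x \<in> set vs" "y \<in> set vs"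
    "height x = height y"
  shows "x = y"
proof -
  obtain i j where i: "i < length vs" "vs ! i = x" and j: "j < length vs" "vs ! j = y"
    using assms by (metis in_set_conv_nth)
  show ?thesis
  proof (cases i j rule: linorder_cases)
    case less then show ?thesis using hv_mono[OF assms(1) j(1) less] i j assms(4) by simp
  next
    case greater then show ?thesis using hv_mono[OF assms(1) i(1) greater] i j assms(4) by simp
  qed (use i j in simp)
qed

theorem mainTheorem2:
  fixes R Byz :: "'r set" and f :: nat
    and votes :: "'r \<Rightarrow> 'n list"
    and parent :: "'n \<Rightarrow> 'n option" and height :: "'n \<Rightarrow> nat" and justify :: "'n \<Rightarrow> 'n"
    and locks :: "'r \<Rightarrow> nat \<Rightarrow> 'n"
    and b w :: 'n
  assumes "finite R" and "card R = 3 * f + 1"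
    and "Byz \<subseteq> R" and "card Byz \<le> f"
    and "tree_heights parent height"
    and "\<forall>r \<in> R - Byz. honest_votes parent height justify (locks r) (votes r)"
    and "conflicting parent b w" and "height b = height w"
  shows "\<not> (has_valid_qc R f votes b \<and> has_valid_qc R f votes w)"
proof
  assume "has_valid_qc R f votes b \<and> has_valid_qc R f votes w"
  then obtain Q1 Q2 where q1: "Q1 \<subseteq> R" "card Q1 \<ge> 2 * f + 1" "\<forall>r\<in>Q1. b \<in> set (votes r)"
    and q2: "Q2 \<subseteq> R" "card Q2 \<ge> 2 * f + 1" "\<forall>r\<in>Q2. w \<in> set (votes r)"
    unfolding has_valid_qc_def by blast
  have fin: "finite Q1" "finite Q2" using q1 q2 assms(1) finite_subset by auto
  have "card (Q1 \<union> Q2) \<le> card R" using q1 q2 assms(1) by (intro card_mono) auto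
  moreover have "card (Q1 \<union> Q2) + card (Q1 \<inter> Q2) = card Q1 + card Q2"
    using card_Un_Int[OF fin] by simp
  ultimately have big: "card (Q1 \<inter> Q2) > f" using q1 q2 assms(2) by linarith
  have "\<not> Q1 \<inter> Q2 \<subseteq> Byz"
  proof
    assume "Q1 \<inter> Q2 \<subseteq> Byz"
    then have "card (Q1 \<inter> Q2) \<le> card Byz"
      using assms(1,3) finite_subset by (intro card_mono) auto
    then show False using big assms(4) by simp
  qed
  then obtain r where r: "r \<in> Q1" "r \<in> Q2" "r \<notin> Byz" by blast
  then have "honest_votes parent height justify (locks r) (votes r)" using assms(6) q1 by blast
  then have "b = w" using hv_inj q1 q2 r assms(8) by metis
  then show False using assms(7) unfolding conflicting_def ancestor_eq_def by simp
qed

end
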